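(* Let $i\ge 0$ be an integer and let $G$ be an $\alpha_i$-metric graph. Then $diam(C(G))\le 3i+2$, i.e., any two central vertices of $G$ are at distance at most $3i+2$ in $G$.
   Context: All graphs are finite, connected, unweighted, undirected, without loops or multiple edges; $d(u,v)$ is the shortest-path distance in $G$. The interval $I(u,v)=\{x: d(u,x)+d(x,v)=d(u,v)\}$. A graph is $\alpha_i$-metric if for all vertices $u,v,w,x$: whenever $v\in I(u,w)$, $w\in I(v,x)$ and $v,w$ are adjacent, then $d(u,x)\ge d(u,v)+d(v,x)-i$. The eccentricity is $e(v)=\max_{u}d(u,v)$, the radius $rad(G)=\min_v e(v)$, and the center $C(G)=\{v: e(v)=rad(G)\}$; $diam(C(G))=\max\{d(x,y): x,y\in C(G)\}$ with distances taken in $G$. *)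

theory Defs
  imports Main
begin

definition graph :: "'a set \<Rightarrow> ('a \<Rightarrow> 'a \<Rightarrow> bool) \<Rightarrow> bool" where
  "graph V E \<longleftrightarrow> finite V \<and> V \<noteq> {} \<and> (\<forall>u v. E u v \<longrightarrow> u \<in> V \<and> v \<in> V)
     \<and> (\<forall>u v. E u v \<longrightarrow> E v u) \<and> (\<forall>v. \<not> E v v)"

definition walk :: "('a \<Rightarrow> 'a \<Rightarrow> bool) \<Rightarrow> 'a list \<Rightarrow> bool" where
  "walk E xs \<longleftrightarrow> xs \<noteq> [] \<and> (\<forall>k. Suc k < length xs \<longrightarrow> E (xs ! k) (xs ! Suc k))"

definition has_walk :: "'a set \<Rightarrow> ('a \<Rightarrow> 'a \<Rightarrow> bool) \<Rightarrow> 'a \<Rightarrow> 'a \<Rightarrow> nat \<Rightarrow> bool" where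
  "has_walk V E u v n \<longleftrightarrow> (\<exists>xs. walk E xs \<and> set xs \<subseteq> V \<and> hd xs = u \<and> last xs = v \<and> length xs = Suc n)"

definition connected_graph :: "'a set \<Rightarrow> ('a \<Rightarrow> 'a \<Rightarrow> bool) \<Rightarrow> bool" where
  "connected_graph V E \<longleftrightarrow> graph V E \<and> (\<forall>u\<in>V. \<forall>v\<in>V. \<exists>n. has_walk V E u v n)"

definition gdist :: "'a set \<Rightarrow> ('a \<Rightarrow> 'a \<Rightarrow> bool) \<Rightarrow> 'a \<Rightarrow> 'a \<Rightarrow> nat" where
  "gdist V E u v = (LEAST n. has_walk V E u v n)"

definition interval :: "'a set \<Rightarrow> ('a \<Rightarrow> 'a \<Rightarrow> bool) \<Rightarrow> 'a \<Rightarrow> 'a \<Rightarrow> 'a set" where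
  "interval V E u v = {x \<in> V. gdist V E u x + gdist V E x v = gdist V E u v}"

definition alpha_metric :: "nat \<Rightarrow> 'a set \<Rightarrow> ('a \<Rightarrow> 'a \<Rightarrow> bool) \<Rightarrow> bool" where
  "alpha_metric i V E \<longleftrightarrow> (\<forall>u\<in>V. \<forall>v\<in>V. \<forall>w\<in>V. \<forall>x\<in>V.
      v \<in> interval V E u w \<and> w \<in> interval V E v x \<and> E v w \<longrightarrow>
      int (gdist V E u x) \<ge> int (gdist V E u v) + int (gdist V E v x) - int i)"

definition ecc :: "'a set \<Rightarrow> ('a \<Rightarrow> 'a \<Rightarrow> bool) \<Rightarrow> 'a \<Rightarrow> nat" where
  "ecc V E v = Max ((\<lambda>u. gdist V E u v) ` V)"

definition radius :: "'a set \<Rightarrow> ('a \<Rightarrow> 'a \<Rightarrow> bool) \<Rightarrow> nat" where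
  "radius V E = Min (ecc V E ` V)"

definition center :: "'a set \<Rightarrow> ('a \<Rightarrow> 'a \<Rightarrow> bool) \<Rightarrow> 'a set" where
  "center V E = {v \<in> V. ecc V E v = radius V E}"

end

theory Submission
  imports Defs
begin

lemma hw0: "has_walk V E u v 0 \<longleftrightarrow> u = v \<and> u \<in> V"
proof
  assume "has_walk V E u v 0"
  then obtain xs where xs: "walk E xs" "set xs \<subseteq> V" "hd xs = u" "last xs = v" "length xs = Suc 0"
    unfolding has_walk_def by blast
  then obtain a where "xs = [a]" by (auto simp: length_Suc_conv)
  then show "u = v \<and> u \<in> V" using xs by auto
next
  assume "u = v \<and> u \<in> V"
  then show "has_walk V E u v 0" unfolding has_walk_def walk_def
    by (intro exI[of _ "[u]"]) auto
qed

lemma hwSuc: "has_walk V E u v (Suc n) \<longleftrightarrow> u \<in> V \<and> (\<exists>w. E u w \<and> has_walk V E w v n)"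
proof
  assume "has_walk V E u v (Suc n)"
  then obtain xs where xs: "walk E xs" "set xs \<subseteq> V" "hd xs = u" "last xs = v" "length xs = Suc (Suc n)"
    unfolding has_walk_def by blast
  then obtain a b zs where eq: "xs = a # b # zs" by (auto simp: length_Suc_conv)
  have "walk E (b # zs)" unfolding walk_def
  proof (intro conjI allI impI)
    fix k assume "Suc k < length (b # zs)"
    then have "Suc (Suc k) < length xs" using eq by simp
    then have "E (xs ! Suc k) (xs ! Suc (Suc k))" using xs(1) unfolding walk_def by blast
    then show "E ((b # zs) ! k) ((b # zs) ! Suc k)" using eq by simp
  qed simp
  moreover have "E u b" using xs(1) eq xs(3) unfolding walk_def by force
  ultimately show "u \<in> V \<and> (\<exists>w. E u w \<and> has_walk V E w v n)" using xs eq unfolding has_walk_def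
    by (intro conjI exI[of _ b]) (auto intro!: exI[of _ "b#zs"])
next
  assume "u \<in> V \<and> (\<exists>w. E u w \<and> has_walk V E w v n)"
  then obtain w ys where u: "u \<in> V" "E u w" and ys: "walk E ys" "set ys \<subseteq> V" "hd ys = w" "last ys = v" "length ys = Suc n"
    unfolding has_walk_def by blast
  have "walk E (u # ys)" unfolding walk_def
  proof (intro conjI allI impI)
    fix k assume k: "Suc k < length (u # ys)"
    show "E ((u # ys) ! k) ((u # ys) ! Suc k)"
    proof (cases k)
      case 0 then show ?thesis using u ys by (cases ys) auto
    next
      case (Suc k') then show ?thesis using k ys(1) unfolding walk_def by auto
    qed
  qed simp
  then show "has_walk V E u v (Suc n)" unfolding has_walk_def using u ys
    by (intro exI[of _ "u#ys"]) auto
qed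

locale cg =
  fixes V :: "'a set" and E :: "'a \<Rightarrow> 'a \<Rightarrow> bool"
  assumes conn: "connected_graph V E"
begin

abbreviation "d \<equiv> gdist V E"

lemma g: "graph V E" using conn unfolding connected_graph_def by auto
lemma EV: "E u v \<Longrightarrow> u \<in> V \<and> v \<in> V" using g unfolding graph_def by auto
lemma Esym: "E u v \<Longrightarrow> E v u" using g unfolding graph_def by auto
lemma Eirr: "\<not> E v v" using g unfolding graph_def by auto
lemma finV: "finite V" using g unfolding graph_def by auto
lemma neV: "V \<noteq> {}" using g unfolding graph_def by auto

lemma hw_trans: "has_walk V E u v m \<Longrightarrow> has_walk V E v w n \<Longrightarrow> has_walk V E u w (m+n)"
proof (induction m arbitrary: u)
  case 0 then show ?case by (simp add: hw0)
next
  case (Suc m)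
  from hwSuc[THEN iffD1, OF Suc.prems(1)] obtain x where x: "u \<in> V" "E u x" "has_walk V E x v m" by blast
  have "has_walk V E x w (m+n)" using Suc.IH[OF x(3) Suc.prems(2)] .
  then show ?case using x hwSuc[of V E u w "m+n"] by auto
qed

lemma hw_sym: "has_walk V E u v n \<Longrightarrow> has_walk V E v u n"
proof (induction n arbitrary: u)
  case 0 then show ?case by (auto simp: hw0)
next
  case (Suc n)
  from hwSuc[THEN iffD1, OF Suc.prems(1)] obtain w where w: "u \<in> V" "E u w" "has_walk V E w v n" by blast
  have "has_walk V E u u 0" using w(1) by (simp add: hw0)
  then have "has_walk V E w u (Suc 0)" using hwSuc[of V E w u 0] EV[OF w(2)] Esym[OF w(2)] by blast
  then have "has_walk V E v u (n + Suc 0)" by (rule hw_trans[OF Suc.IH[OF w(3)]])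
  then show ?case by simp
qed

lemma hw_d: "u \<in> V \<Longrightarrow> v \<in> V \<Longrightarrow> has_walk V E u v (d u v)"
  unfolding gdist_def by (rule LeastI_ex) (use conn in \<open>auto simp: connected_graph_def\<close>)

lemma d_le: "has_walk V E u v n \<Longrightarrow> d u v \<le> n"
  unfolding gdist_def by (rule Least_le)

lemma d_refl: "u \<in> V \<Longrightarrow> d u u = 0" using d_le[of u u 0] by (simp add: hw0)
lemma d_zero: "u\<in>V \<Longrightarrow> v\<in>V \<Longrightarrow> d u v = 0 \<Longrightarrow> u = v" using hw_d[of u v] by (simp add: hw0)
lemma d_sym: "u\<in>V \<Longrightarrow> v\<in>V \<Longrightarrow> d u v = d v u"
proof -
  assume a: "u\<in>V" "v\<in>V"
  have "d u v \<le> d v u" by (rule d_le[OF hw_sym[OF hw_d[OF a(2) a(1)]]])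
  moreover have "d v u \<le> d u v" by (rule d_le[OF hw_sym[OF hw_d[OF a(1) a(2)]]])
  ultimately show ?thesis by simp
qed
lemma d_tri: "u\<in>V \<Longrightarrow> v\<in>V \<Longrightarrow> w\<in>V \<Longrightarrow> d u w \<le> d u v + d v w"
  by (rule d_le[OF hw_trans[OF hw_d hw_d]])
lemma d_adj: "E u v \<Longrightarrow> d u v = 1"
proof -
  assume e: "E u v"
  have "has_walk V E v v 0" using e EV by (simp add: hw0)
  then have "has_walk V E u v (Suc 0)" using hwSuc[of V E u v 0] e EV by blast
  then have "d u v \<le> 1" using d_le by fastforce
  moreover have "d u v \<noteq> 0" using d_zero e EV Eirr by blast
  ultimately show ?thesis by simp
qed

lemma d_step: "u\<in>V \<Longrightarrow> v\<in>V \<Longrightarrow> u \<noteq> v \<Longrightarrow> \<exists>w. E u w \<and> d w v + 1 = d u v"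
proof -
  assume a: "u\<in>V" "v\<in>V" "u \<noteq> v"
  have "d u v \<noteq> 0" using d_zero a by blast
  then obtain n where n: "d u v = Suc n" by (cases "d u v") auto
  then obtain w where w: "E u w" "has_walk V E w v n" using hw_d[OF a(1,2)] by (auto simp: hwSuc)
  have "d w v \<le> n" using d_le w by blast
  moreover have "d u v \<le> d u w + d w v" using d_tri a w EV by blast
  ultimately show ?thesis using n d_adj[OF w(1)] w(1) by (intro exI[of _ w]) auto
qed

lemma lip: "E a b \<Longrightarrow> u \<in> V \<Longrightarrow> d u b \<le> d u a + 1"
proof -
  assume a: "E a b" "u \<in> V"
  have "d u b \<le> d u a + d a b" using d_tri[of u a b] a EV by blast
  then show ?thesis using d_adj[OF a(1)] by simp
qed

lemma geod: "u\<in>V \<Longrightarrow> v\<in>V \<Longrightarrow> d u v = n \<Longrightarrow> \<exists>p. p 0 = u \<and> p n = v \<and> (\<forall>s<n. E (p s) (p (Suc s)))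
   \<and> (\<forall>s\<le>n. p s \<in> V) \<and> (\<forall>s t. s \<le> t \<longrightarrow> t \<le> n \<longrightarrow> d (p s) (p t) = t - s)"
proof (induction n arbitrary: u)
  case 0
  then have uv: "u = v" using d_zero by blast
  have "d u u = 0" using 0 d_refl by blast
  then show ?case using 0 uv by (intro exI[of _ "\<lambda>_. u"]) simp
next
  case (Suc n)
  have "u \<noteq> v" using Suc.prems d_refl by auto
  then obtain w where w: "E u w" "d w v + 1 = d u v" using d_step Suc.prems(1,2) by blast
  have wV: "w \<in> V" using w EV by blast
  have dwv: "d w v = n" using w(2) Suc.prems(3) by simp
  from Suc.IH[OF wV Suc.prems(2) dwv] obtain p' where p': "p' 0 = w" "p' n = v" "\<forall>s<n. E (p' s) (p' (Suc s))" "\<forall>s\<le>n. p' s \<in> V"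
     "\<forall>s t. s \<le> t \<longrightarrow> t \<le> n \<longrightarrow> d (p' s) (p' t) = t - s"
    by blast
  define p where "p = (\<lambda>s. if s = 0 then u else p' (s - 1))"
  have dist: "d (p s) (p t) = t - s" if st: "s \<le> t" "t \<le> Suc n" for s t
  proof (cases "s = 0")
    case True
    show ?thesis
    proof (cases "t = 0")
      case True then show ?thesis using \<open>s = 0\<close> p_def d_refl Suc.prems by simp
    next
      case False
      then have pt: "p t = p' (t - 1)" "t - 1 \<le> n" using p_def st by auto
      have V1: "p' (t-1) \<in> V" using p'(4) pt(2) by blast
      have e1: "d (p' 0) (p' (t-1)) = (t - 1) - 0" using p'(5) pt(2) by blast
      have e2: "d (p' (t-1)) (p' n) = n - (t - 1)" using p'(5) pt(2) by blast
      have "d u (p' (t-1)) \<le> d u w + d w (p' (t-1))" using d_tri Suc.prems wV V1 by blast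
      also have "\<dots> = 1 + (t - 1)" using d_adj[OF w(1)] p'(1) e1 by simp
      finally have le: "d u (p' (t-1)) \<le> t" using False by simp
      have "d u v \<le> d u (p' (t-1)) + d (p' (t-1)) v" using d_tri Suc.prems V1 by blast
      then have "t \<le> d u (p' (t-1))" using Suc.prems(3) e2 p'(2) pt(2) by simp
      then show ?thesis using le True pt p_def by simp
    qed
  next
    case False
    then have "p s = p' (s - 1)" "p t = p' (t - 1)" "s - 1 \<le> t - 1" "t - 1 \<le> n" using p_def st by auto
    then show ?thesis using p'(5) st False by simp
  qed
  show ?case
  proof (intro exI[of _ p] conjI allI impI)
    show "p 0 = u" using p_def by simp
    show "p (Suc n) = v" using p_def p'(2) by simp
    fix s
    show "s < Suc n \<Longrightarrow> E (p s) (p (Suc s))"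
    proof -
      assume "s < Suc n"
      then show "E (p s) (p (Suc s))" using p_def p'(1,3) w(1) by (cases s) auto
    qed
    show "s \<le> Suc n \<Longrightarrow> p s \<in> V"
    proof -
      assume "s \<le> Suc n"
      then show "p s \<in> V" using p_def p'(4) Suc.prems(1) by auto
    qed
    fix t
    show "s \<le> t \<Longrightarrow> t \<le> Suc n \<Longrightarrow> d (p s) (p t) = t - s" using dist by blast
  qed
qed

lemma alpha:
  assumes "alpha_metric i V E" "U\<in>V" "v\<in>V" "w\<in>V" "X\<in>V" "E v w"
    "d U w = d U v + 1" "d v X = d w X + 1"
  shows "d U v + d v X \<le> d U X + i"
proof -
  have "d v w = 1" using d_adj assms by blast
  then have "v \<in> interval V E U w" "w \<in> interval V E v X"
    using assms unfolding interval_def by auto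
  then have "int (d U X) \<ge> int (d U v) + int (d v X) - int i"
    using assms unfolding alpha_metric_def by blast
  then show ?thesis by linarith
qed

lemma ecc_ge: "u\<in>V \<Longrightarrow> v\<in>V \<Longrightarrow> d u v \<le> ecc V E v"
  unfolding ecc_def by (rule Max_ge) (use finV in auto)

lemma ecc_attain: "v \<in> V \<Longrightarrow> \<exists>u\<in>V. d u v = ecc V E v"
proof -
  have "ecc V E v \<in> (\<lambda>u. d u v) ` V" unfolding ecc_def by (rule Max_in) (use finV neV in auto)
  then show ?thesis by auto
qed

lemma rad_le: "v\<in>V \<Longrightarrow> radius V E \<le> ecc V E v"
  unfolding radius_def by (rule Min_le) (use finV in auto)

lemma cross: "\<forall>a. a \<in> V \<longrightarrow> b \<in> V \<longrightarrow> u \<in> V \<longrightarrow> d a b = n \<longrightarrow> d u a < r \<longrightarrow> r \<le> d u b \<longrightarrow>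
   (\<exists>v w. E v w \<and> d u v + 1 = d u w \<and> r \<le> d u w \<and> d a v + 1 + d w b \<le> n)"
proof (induction n)
  case 0
  then show ?case using d_zero by fastforce
next
  case (Suc n)
  show ?case
  proof (intro allI impI)
    fix a assume a: "a \<in> V" "b \<in> V" "u \<in> V" "d a b = Suc n" "d u a < r" "r \<le> d u b"
    then have "a \<noteq> b" using d_refl by auto
    then obtain a' where a': "E a a'" "d a' b + 1 = d a b" using d_step a by blast
    have a'V: "a' \<in> V" using a' EV by blast
    show "\<exists>v w. E v w \<and> d u v + 1 = d u w \<and> r \<le> d u w \<and> d a v + 1 + d w b \<le> Suc n"
    proof (cases "r \<le> d u a'")
      case True
      have "d u a' \<le> d u a + 1" using lip a' a by blast
      then show ?thesis using True a a' d_refl by (intro exI[of _ a] exI[of _ a']) auto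
    next
      case False
      then obtain v w where vw: "E v w" "d u v + 1 = d u w" "r \<le> d u w" "d a' v + 1 + d w b \<le> n"
        using Suc.IH a a' a'V by force
      have "d a v \<le> d a a' + d a' v" using d_tri a a'V vw EV by blast
      then show ?thesis using vw d_adj[OF a'(1)] by (intro exI[of _ v] exI[of _ w]) auto
    qed
  qed
qed

lemma main:
  assumes al: "alpha_metric i V E" and x: "x \<in> center V E" and y: "y \<in> center V E"
  shows "d x y \<le> 3*i+2"
proof (rule ccontr)
  assume neg: "\<not> ?thesis"
  define k where "k = d x y"
  define r where "r = radius V E"
  have kbig: "3*i+3 \<le> k" using neg k_def by simp
  have xV: "x \<in> V" "ecc V E x = r" using x unfolding center_def r_def by auto
  have yV: "y \<in> V" "ecc V E y = r" using y unfolding center_def r_def by auto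
  obtain p where p0: "p 0 = x" and pk: "p k = y" and pE: "\<forall>s<k. E (p s) (p (Suc s))"
    and pV: "\<forall>s\<le>k. p s \<in> V" and pd: "\<forall>s t. s \<le> t \<longrightarrow> t \<le> k \<longrightarrow> d (p s) (p t) = t - s"
    using geod[OF xV(1) yV(1) k_def[symmetric]] by blast
  define j where "j = i+1"
  define m where "m = 2*i+2"
  have jk: "j \<le> k" "m \<le> k" "j < m" using kbig j_def m_def by auto
  have pjV: "p j \<in> V" "p m \<in> V" using pV jk by auto
  obtain u where uV: "u \<in> V" and uj: "d u (p j) = ecc V E (p j)" using ecc_attain pjV by blast
  have ujr: "r \<le> d u (p j)" using rad_le[OF pjV(1)] uj r_def by simp
  have ux: "d u x \<le> r" using ecc_ge[OF uV xV(1)] xV by simp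
  have uy: "d u y \<le> r" using ecc_ge[OF uV yV(1)] yV by simp
  have pdx: "d (p s) x = s" if "s \<le> k" for s
    using pd[rule_format, of 0 s] that p0 d_sym[of x "p s"] xV pV by auto
  have pdy: "d (p s) y = k - s" if "s \<le> k" for s
    using pd[rule_format, of s k] that pk by auto
  have nodec: False if s: "j \<le> s" "s < k" "d u (p (Suc s)) + 1 = d u (p s)" "r \<le> d u (p (Suc s)) + 1" for s
  proof -
    have "d u (p (Suc s)) + d (p (Suc s)) x \<le> d u x + i"
    proof (rule alpha[OF al uV])
      show "p (Suc s) \<in> V" "p s \<in> V" "x \<in> V" using pV s xV by auto
      show "E (p (Suc s)) (p s)" using pE s Esym by blast
      show "d u (p s) = d u (p (Suc s)) + 1" using s by simp
      show "d (p (Suc s)) x = d (p s) x + 1" using pdx s by simp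
    qed
    then show False using pdx[of "Suc s"] s ux j_def by simp
  qed
  have lipf: "d u (p (Suc s)) \<le> d u (p s) + 1 \<and> d u (p s) \<le> d u (p (Suc s)) + 1" if "s < k" for s
  proof -
    have e: "E (p s) (p (Suc s))" using pE that by blast
    show ?thesis using lip[OF e uV] lip[OF Esym[OF e] uV] by simp
  qed
  have up: "r \<le> d u (p (j+n))" if "j + n \<le> k" for n
    using that
  proof (induction n)
    case 0 then show ?case using ujr by simp
  next
    case (Suc n)
    then have IH: "r \<le> d u (p (j+n))" by simp
    show ?case
    proof (rule ccontr)
      assume "\<not> ?case"
      then have "d u (p (Suc (j+n))) < r" by simp
      moreover have "d u (p (j+n)) \<le> d u (p (Suc (j+n))) + 1" using lipf Suc.prems by simp
      ultimately show False using nodec[of "j+n"] IH Suc.prems by simp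
    qed
  qed
  have down: "d u (p (k - n)) \<le> r" if "n \<le> k - j" for n
    using that
  proof (induction n)
    case 0 then show ?case using uy pk by simp
  next
    case (Suc n)
    have eqs: "Suc (k - Suc n) = k - n" using Suc.prems jk by simp
    have IH: "d u (p (Suc (k - Suc n))) \<le> r" using Suc.IH Suc.prems eqs by simp
    show ?case
    proof (rule ccontr)
      assume "\<not> ?case"
      then have "r < d u (p (k - Suc n))" by simp
      moreover have "d u (p (k - Suc n)) \<le> d u (p (Suc (k - Suc n))) + 1" using lipf Suc.prems jk by simp
      moreover have "j \<le> k - Suc n" "k - Suc n < k" using Suc.prems jk by auto
      ultimately show False using nodec[of "k - Suc n"] IH by simp
    qed
  qed
  have fj: "d u (p j) = r" using down[of "k-j"] jk ujr by simp
  have fm: "d u (p m) = r" using down[of "k-m"] up[of "m-j"] jk by simp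
  have rk: "k \<le> r" using ecc_ge[OF xV(1) yV(1)] yV k_def by simp
  have "p j \<noteq> u" using fj rk kbig d_refl uV by auto
  from d_step[OF pjV(1) uV this] obtain q where q: "E (p j) q" "d q u + 1 = d (p j) u" by blast
  have qV: "q \<in> V" using q EV by blast
  have uq: "d u q + 1 = r" using q fj d_sym uV qV pjV by simp
  have a: "d x q \<le> j"
  proof (rule ccontr)
    assume "\<not> ?thesis"
    moreover have "d x q \<le> d x (p j) + 1" using lip[OF q(1) xV(1)] .
    moreover have xpj: "d x (p j) = j" using pdx[of j] jk(1) d_sym[of x "p j"] xV pjV by simp
    ultimately have eq: "d x q = d x (p j) + 1" by simp
    have "d x (p j) + d (p j) u \<le> d x u + i"
      by (rule alpha[OF al xV(1) pjV(1) qV uV q(1) eq]) (use q in simp)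
    then show False using xpj d_sym[of x u] xV uV ux fj d_sym[of u "p j"] pjV j_def by simp
  qed
  have pjm: "d (p j) (p m) = m - j" using pd jk by simp
  have b: "d q (p m) \<le> m - j"
  proof (rule ccontr)
    assume "\<not> ?thesis"
    moreover have "d q (p m) \<le> d q (p j) + d (p j) (p m)" using d_tri qV pjV by blast
    moreover have "d q (p j) = 1" using d_adj Esym q(1) by blast
    ultimately have eq: "d q (p m) = d (p j) (p m) + 1" using pjm by simp
    have "d u q + d q (p m) \<le> d u (p m) + i"
      by (rule alpha[OF al uV qV pjV(1) pjV(2) _ _ eq]) (use Esym q uq fj in auto)
    then show False using uq fm eq pjm j_def m_def by simp
  qed
  have c: "k - j \<le> d q y" using d_tri[OF xV(1) qV yV(1)] a k_def by simp
  obtain v w where vw: "E v w" "d u v + 1 = d u w" "r \<le> d u w" "d q v + 1 + d w (p m) \<le> d q (p m)"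
    using cross[rule_format, OF qV pjV(2) uV refl, of r] uq fm by auto
  have vV: "v \<in> V" and wV: "w \<in> V" using vw EV by auto
  have t1: "d q y \<le> d q v + d v y" using d_tri qV vV yV by blast
  have t2: "d w y \<le> d w (p m) + d (p m) y" using d_tri wV pjV yV by blast
  have t3: "d v y \<le> d v w + d w y" using d_tri vV wV yV by blast
  have pmy: "d (p m) y = k - m" using pdy jk by simp
  have vw1: "d v w = 1" using d_adj vw by blast
  have eq: "d v y = d w y + 1" using t1 t2 t3 pmy vw1 vw(4) c b jk by linarith
  have "d u v + d v y \<le> d u y + i"
    by (rule alpha[OF al uV vV wV yV(1) vw(1)]) (use vw eq in auto)
  then show False using eq t2 pmy vw uy kbig m_def t1 c b jk by linarith
qed

end

theorem theorem1:
  fixes V :: "'a set" and E :: "'a \<Rightarrow> 'a \<Rightarrow> bool" and i :: nat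
  assumes "connected_graph V E"
    and "alpha_metric i V E"
    and "x \<in> center V E" and "y \<in> center V E"
  shows "gdist V E x y \<le> 3 * i + 2"
proof -
  interpret cg V E by unfold_locales (rule assms(1))
  show ?thesis using main[OF assms(2-4)] by simp
qed

end
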